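(* Let $n\ge 1$ and let $T$ be a Cayley tree on $[n]$ rooted at $1$. Then $\mathrm{lead}(T) = n - \mathrm{impe}(T)$, where $\mathrm{lead}(T)$ is the number of leading vertices of $T$ and $\mathrm{impe}(T)$ is the number of improper edges of $T$.
   Context: A Cayley tree of size $n$ is a tree whose vertices are labelled bijectively by $[n]=\{1,\dots,n\}$; we consider such trees rooted at the vertex $1$ and orient each edge $(i,j)$ from the parent $i$ to the child $j$. For a vertex $v$, $\beta_T(v)$ is the smallest label among the descendants of $v$ ($v$ itself included). An edge $(i,j)$ is improper if $\lambda_T(i) > \beta_T(j)$ (where $\lambda_T$ denotes the label), and proper otherwise. For a vertex $i$, let $L(i)=(1=a_0,a_1,\dots,a_k=i)$ be the path from the root to $i$; the greater ancestors path of $i$ is the longest suffix $(a_p,a_{p+1},\dots,a_k=i)$ of $L(i)$ such that every vertex $j$ on it satisfies $\lambda_T(j)\ge \lambda_T(i)$. The vertex $i$ is a leading vertex if $\beta_T(a_p)=\lambda_T(i)$. *)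

theory Defs
  imports Main
begin

text \<open>A Cayley tree on [n] = {1..n} rooted at 1 is encoded by its parent function
  par: every vertex i in {2..n} has a parent par i in {1..n}, and iterating par from i
  eventually reaches the root 1 (acyclicity/connectedness). The value par 1 is irrelevant.
  Edges are oriented parent -> child: the edge set is {(par j, j) | j in {2..n}}.\<close>

definition cayley_tree :: "nat \<Rightarrow> (nat \<Rightarrow> nat) \<Rightarrow> bool" where
  "cayley_tree n par \<longleftrightarrow>
     (\<forall>i\<in>{2..n}. par i \<in> {1..n} \<and> (\<exists>k. (par ^^ k) i = 1))"

text \<open>desc n par j v: j is a descendant of v (j itself included), i.e. v lies on the
  path from the root to j. The iteration stops at the root.\<close>
definition desc :: "nat \<Rightarrow> (nat \<Rightarrow> nat) \<Rightarrow> nat \<Rightarrow> nat \<Rightarrow> bool" where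
  "desc n par j v \<longleftrightarrow> j \<in> {1..n} \<and>
     (\<exists>k. (\<forall>m<k. (par ^^ m) j \<noteq> 1) \<and> (par ^^ k) j = v)"

definition beta :: "nat \<Rightarrow> (nat \<Rightarrow> nat) \<Rightarrow> nat \<Rightarrow> nat" where
  "beta n par v = Min {j. desc n par j v}"

definition impe :: "nat \<Rightarrow> (nat \<Rightarrow> nat) \<Rightarrow> nat" where
  "impe n par = card {j\<in>{2..n}. par j > beta n par j}"

text \<open>Vertices a of L(i) such that every vertex on the path from a to i has label \<ge> i;
  these are exactly the starting vertices of suffixes of L(i) satisfying the condition.\<close>
definition ga_starts :: "nat \<Rightarrow> (nat \<Rightarrow> nat) \<Rightarrow> nat \<Rightarrow> nat set" where
  "ga_starts n par i = {a. desc n par i a \<and>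
      (\<forall>w. desc n par i w \<and> desc n par w a \<longrightarrow> w \<ge> i)}"

text \<open>a_p: the start of the longest such suffix, i.e. the one closest to the root.\<close>
definition ga_top :: "nat \<Rightarrow> (nat \<Rightarrow> nat) \<Rightarrow> nat \<Rightarrow> nat" where
  "ga_top n par i = (THE a. a \<in> ga_starts n par i \<and>
      (\<forall>b\<in>ga_starts n par i. desc n par b a))"

definition leading :: "nat \<Rightarrow> (nat \<Rightarrow> nat) \<Rightarrow> nat \<Rightarrow> bool" where
  "leading n par i \<longleftrightarrow> beta n par (ga_top n par i) = i"

definition lead :: "nat \<Rightarrow> (nat \<Rightarrow> nat) \<Rightarrow> nat" where
  "lead n par = card {i\<in>{1..n}. leading n par i}"

end

theory Submission
  imports Defs
begin

locale ct =
  fixes n :: nat and par :: "nat \<Rightarrow> nat"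
  assumes ct: "cayley_tree n par"
begin

definition dep :: "nat \<Rightarrow> nat" where
  "dep j = (LEAST k. (par ^^ k) j = 1)"

lemma ex_root: "j \<in> {1..n} \<Longrightarrow> \<exists>k. (par ^^ k) j = 1"
proof (cases "j = 1")
  case True then show ?thesis by (intro exI[of _ 0]) simp
next
  case False
  assume "j \<in> {1..n}"
  with False have "j \<in> {2..n}" by auto
  then show ?thesis using ct unfolding cayley_tree_def by blast
qed

lemma dep_eq:
  assumes "(par ^^ k) x = 1" "\<forall>m<k. (par ^^ m) x \<noteq> 1"
  shows "dep x = k"
  unfolding dep_def
  by (rule Least_equality) (use assms not_less in auto)

lemma dep_prop:
  assumes "j \<in> {1..n}"
  shows "(par ^^ dep j) j = 1" "\<forall>m<dep j. (par ^^ m) j \<noteq> 1"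
proof -
  obtain k where "(par ^^ k) j = 1" using ex_root assms by blast
  then show "(par ^^ dep j) j = 1" unfolding dep_def by (rule LeastI)
  show "\<forall>m<dep j. (par ^^ m) j \<noteq> 1" unfolding dep_def using not_less_Least by blast
qed

lemma par_in: "j \<in> {2..n} \<Longrightarrow> par j \<in> {1..n}"
  using ct unfolding cayley_tree_def by blast

lemma dep_par:
  assumes "j \<in> {2..n}"
  shows "dep j = Suc (dep (par j))"
proof -
  have j1: "j \<in> {1..n}" using assms by auto
  have "dep j \<noteq> 0"
  proof
    assume "dep j = 0"
    then have "j = 1" using dep_prop(1)[OF j1] by simp
    then show False using assms by simp
  qed
  then obtain d where d: "dep j = Suc d" by (cases "dep j") auto
  have "(par ^^ d) (par j) = 1" using dep_prop(1)[OF j1] d by (simp add: funpow_Suc_right del: funpow.simps)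
  moreover have "\<forall>m<d. (par ^^ m) (par j) \<noteq> 1"
  proof (intro allI impI)
    fix m assume "m < d"
    then have "(par ^^ Suc m) j \<noteq> 1" using dep_prop(2)[OF j1] d by auto
    then show "(par ^^ m) (par j) \<noteq> 1" by (simp add: funpow_Suc_right del: funpow.simps)
  qed
  ultimately have "dep (par j) = d" by (rule dep_eq)
  then show ?thesis using d by simp
qed

lemma dep1: "dep 1 = 0"
  by (rule dep_eq) auto

lemma desc_step:
  "desc n par j v \<longleftrightarrow> (j \<in> {1..n} \<and> v = j) \<or> (j \<in> {2..n} \<and> desc n par (par j) v)"
proof
  assume "desc n par j v"
  then obtain k where j: "j \<in> {1..n}" and k: "\<forall>m<k. (par ^^ m) j \<noteq> 1" "(par ^^ k) j = v"
    unfolding desc_def by blast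
  show "(j \<in> {1..n} \<and> v = j) \<or> (j \<in> {2..n} \<and> desc n par (par j) v)"
  proof (cases k)
    case 0 then show ?thesis using j k by simp
  next
    case (Suc k')
    then have "j \<noteq> 1" using k(1) by (metis funpow_0 zero_less_Suc)
    then have j2: "j \<in> {2..n}" using j by auto
    have "\<forall>m<k'. (par ^^ m) (par j) \<noteq> 1"
    proof (intro allI impI)
      fix m assume "m < k'"
      then have "(par ^^ Suc m) j \<noteq> 1" using k Suc by auto
      then show "(par ^^ m) (par j) \<noteq> 1" by (simp add: funpow_Suc_right del: funpow.simps)
    qed
    moreover have "(par ^^ k') (par j) = v" using k(2) Suc by (simp add: funpow_Suc_right del: funpow.simps)
    ultimately have "desc n par (par j) v" unfolding desc_def using par_in[OF j2] by blast
    then show ?thesis using j2 by blast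
  qed
next
  assume "(j \<in> {1..n} \<and> v = j) \<or> (j \<in> {2..n} \<and> desc n par (par j) v)"
  then show "desc n par j v"
  proof
    assume "j \<in> {1..n} \<and> v = j"
    then show ?thesis unfolding desc_def by (intro conjI exI[of _ 0]) auto
  next
    assume a: "j \<in> {2..n} \<and> desc n par (par j) v"
    then obtain k where k: "\<forall>m<k. (par ^^ m) (par j) \<noteq> 1" "(par ^^ k) (par j) = v"
      unfolding desc_def by blast
    have "\<forall>m<Suc k. (par ^^ m) j \<noteq> 1"
    proof (intro allI impI)
      fix m assume m: "m < Suc k"
      show "(par ^^ m) j \<noteq> 1"
      proof (cases m)
        case 0 then show ?thesis using a by auto
      next
        case (Suc m') then show ?thesis using k m by (simp add: funpow_Suc_right del: funpow.simps)
      qed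
    qed
    moreover have "(par ^^ Suc k) j = v" using k by (simp add: funpow_Suc_right del: funpow.simps)
    ultimately show ?thesis unfolding desc_def using a by (intro conjI exI[of _ "Suc k"]) auto
  qed
qed

lemma desc_refl: "j \<in> {1..n} \<Longrightarrow> desc n par j j"
  using desc_step[of j j] by blast

lemma desc_dom: "desc n par j v \<Longrightarrow> j \<in> {1..n}"
  unfolding desc_def by blast

lemma desc_up: "desc n par j v \<Longrightarrow> v \<noteq> j \<Longrightarrow> j \<in> {2..n} \<and> desc n par (par j) v"
  using desc_step[of j v] by blast

lemma desc_ind:
  assumes "\<And>j. (\<And>j'. dep j' < dep j \<Longrightarrow> P j') \<Longrightarrow> P j"
  shows "P j"
proof -
  have "\<forall>j. dep j = d \<longrightarrow> P j" for d
    by (induction d rule: less_induct) (use assms in blast)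
  then show ?thesis by blast
qed

lemma desc_range: "desc n par j v \<Longrightarrow> v \<in> {1..n} \<and> dep v \<le> dep j \<and> (dep v = dep j \<longrightarrow> v = j)"
proof (induction j rule: desc_ind)
  case (1 j)
  show ?case
  proof (cases "v = j")
    case True then show ?thesis using desc_dom[OF 1(2)] by simp
  next
    case False
    then have j2: "j \<in> {2..n}" and d: "desc n par (par j) v" using desc_up[OF 1(2)] by auto
    have lt: "dep (par j) < dep j" using dep_par[OF j2] by simp
    have "v \<in> {1..n} \<and> dep v \<le> dep (par j)" using 1(1)[OF lt d] by blast
    then show ?thesis using lt by simp
  qed
qed

lemma desc_antisym: "desc n par j a \<Longrightarrow> desc n par a j \<Longrightarrow> a = j"
  using desc_range by (metis le_antisym)

lemma desc_trans: "desc n par j w \<Longrightarrow> desc n par w a \<Longrightarrow> desc n par j a"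
proof (induction j rule: desc_ind)
  case (1 j)
  show ?case
  proof (cases "w = j")
    case True then show ?thesis using 1(3) by simp
  next
    case False
    then have "j \<in> {2..n}" and d: "desc n par (par j) w" using desc_up[OF 1(2)] by auto
    have lt: "dep (par j) < dep j" using dep_par[OF \<open>j \<in> {2..n}\<close>] by simp
    have "desc n par (par j) a" using 1(1)[OF lt d 1(3)] .
    then show ?thesis using desc_step \<open>j \<in> {2..n}\<close> by blast
  qed
qed

lemma desc_linear: "desc n par i a \<Longrightarrow> desc n par i b \<Longrightarrow> desc n par a b \<or> desc n par b a"
proof (induction i rule: desc_ind)
  case (1 i)
  show ?case
  proof (cases "a = i \<or> b = i")
    case True then show ?thesis using 1(2,3) by blast
  next
    case False
    then have i2: "i \<in> {2..n}" and d: "desc n par (par i) a" "desc n par (par i) b" using desc_up[OF 1(2)] desc_up[OF 1(3)] by auto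
    have lt: "dep (par i) < dep i" using dep_par[OF i2] by simp
    show ?thesis using 1(1)[OF lt d] .
  qed
qed

lemma desc_par: "a \<in> {2..n} \<Longrightarrow> desc n par a (par a)"
  using desc_step[of a "par a"] desc_refl[OF par_in] by blast

lemma desc_root1: "desc n par 1 v \<Longrightarrow> v = 1"
  using desc_step[of 1 v] by auto

lemma desc_finite: "finite {j. desc n par j v}"
  by (rule finite_subset[of _ "{1..n}"]) (use desc_dom in auto)

lemma beta_prop:
  assumes "v \<in> {1..n}"
  shows "desc n par (beta n par v) v" "\<And>j. desc n par j v \<Longrightarrow> beta n par v \<le> j"
proof -
  have ne: "{j. desc n par j v} \<noteq> {}" using desc_refl assms by blast
  show "desc n par (beta n par v) v" unfolding beta_def using Min_in[OF desc_finite ne] by blast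
  show "\<And>j. desc n par j v \<Longrightarrow> beta n par v \<le> j" unfolding beta_def using desc_finite by auto
qed

lemma ga_top_char:
  assumes "a \<in> ga_starts n par i" "a = 1 \<or> par a < i"
  shows "ga_top n par i = a"
proof -
  have da: "desc n par i a" using assms(1) unfolding ga_starts_def by blast
  have top: "\<forall>b\<in>ga_starts n par i. desc n par b a"
  proof
    fix b assume b: "b \<in> ga_starts n par i"
    then have db: "desc n par i b" unfolding ga_starts_def by blast
    show "desc n par b a"
    proof (rule ccontr)
      assume nb: "\<not> desc n par b a"
      then have ab: "desc n par a b" using desc_linear da db by blast
      have "a \<noteq> b" using nb ab by auto
      then have "a \<in> {2..n}" "desc n par (par a) b" using desc_up[OF ab] by auto
      then have "a \<noteq> 1" by auto
      then have pa: "par a < i" using assms(2) by auto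
      have "desc n par i (par a)" using desc_trans[OF da desc_par[OF \<open>a \<in> {2..n}\<close>]] .
      then have "par a \<ge> i" using b \<open>desc n par (par a) b\<close> unfolding ga_starts_def by blast
      then show False using pa by simp
    qed
  qed
  show ?thesis unfolding ga_top_def
  proof (rule the_equality)
    show "a \<in> ga_starts n par i \<and> (\<forall>b\<in>ga_starts n par i. desc n par b a)" using assms(1) top by blast
  next
    fix a' assume "a' \<in> ga_starts n par i \<and> (\<forall>b\<in>ga_starts n par i. desc n par b a')"
    then have h1: "a' \<in> ga_starts n par i" and h2: "desc n par a a'" using assms(1) by auto
    have h3: "desc n par a' a" using top h1 by blast
    show "a' = a" using desc_antisym[OF h3 h2] by simp
  qed
qed

lemma ga_exists_aux:
  "a \<in> ga_starts n par i \<Longrightarrow> \<exists>a'\<in>ga_starts n par i. a' = 1 \<or> par a' < i"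
proof (induction a rule: desc_ind)
  case (1 a)
  show ?case
  proof (cases "a = 1 \<or> par a < i")
    case True then show ?thesis using 1(2) by blast
  next
    case False
    have da: "desc n par i a" using 1(2) unfolding ga_starts_def by blast
    have a2: "a \<in> {2..n}" using desc_range[OF da] False by auto
    have pin: "par a \<in> ga_starts n par i"
      unfolding ga_starts_def
    proof (intro CollectI conjI allI impI)
      show "desc n par i (par a)" using desc_trans[OF da desc_par[OF a2]] .
      fix w assume w: "desc n par i w \<and> desc n par w (par a)"
      show "i \<le> w"
      proof (cases "desc n par w a")
        case True then show ?thesis using w 1(2) unfolding ga_starts_def by blast
      next
        case nw: False
        then have aw: "desc n par a w" using desc_linear da w by blast
        have "a \<noteq> w" using nw aw by auto
        then have pw: "desc n par (par a) w" using desc_up[OF aw] by auto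
        have "w = par a" using desc_antisym[OF pw] w by blast
        then show ?thesis using False by simp
      qed
    qed
    have lt: "dep (par a) < dep a" using dep_par[OF a2] by simp
    show ?thesis using 1(1)[OF lt pin] .
  qed
qed

lemma i_in_ga: "i \<in> {1..n} \<Longrightarrow> i \<in> ga_starts n par i"
  unfolding ga_starts_def using desc_refl desc_antisym by auto

lemma ga_exists: "i \<in> {1..n} \<Longrightarrow> \<exists>a\<in>ga_starts n par i. a = 1 \<or> par a < i"
  using ga_exists_aux i_in_ga by blast


lemma proper_lt:
  assumes j2: "j \<in> {2..n}" and le: "par j \<le> beta n par j"
  shows "par j < beta n par j"
proof (rule ccontr)
  assume "\<not> par j < beta n par j"
  then have eq: "par j = beta n par j" using le by simp
  have j1: "j \<in> {1..n}" using j2 by auto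
  have d1: "desc n par (par j) j" using beta_prop(1)[OF j1] eq by simp
  have "par j = j" using desc_antisym[OF desc_par[OF j2] d1] .
  then show False using dep_par[OF j2] by simp
qed

lemma proper_top:
  assumes j2: "j \<in> {2..n}" and lt: "par j < beta n par j"
  shows "ga_top n par (beta n par j) = j"
proof (rule ga_top_char)
  have j1: "j \<in> {1..n}" using j2 by auto
  show "j \<in> ga_starts n par (beta n par j)"
    unfolding ga_starts_def using beta_prop[OF j1] by blast
  show "j = 1 \<or> par j < beta n par j" using lt by simp
qed

lemma beta1: "n \<ge> 1 \<Longrightarrow> beta n par 1 = 1"
proof -
  assume "n \<ge> 1"
  then have o: "(1::nat) \<in> {1..n}" by simp
  have "beta n par 1 \<in> {1..n}" using desc_dom[OF beta_prop(1)[OF o]] .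
  moreover have "beta n par 1 \<le> 1" using beta_prop(2)[OF o desc_refl[OF o]] .
  ultimately show ?thesis by simp
qed

lemma main:
  assumes n1: "n \<ge> 1"
  shows "lead n par = n - impe n par"
proof -
  define P where "P = {j\<in>{2..n}. \<not> par j > beta n par j}"
  define I where "I = {j\<in>{2..n}. par j > beta n par j}"
  define L where "L = {i\<in>{1..n}. leading n par i}"
  have o: "(1::nat) \<in> {1..n}" using n1 by simp
  have PI: "card I + card P = n - 1"
  proof -
    have "I \<union> P = {2..n}" "I \<inter> P = {}" unfolding I_def P_def by auto
    then have "card I + card P = card {2..n}"
      by (metis card_Un_disjoint finite_Un finite_atLeastAtMost)
    then show ?thesis by simp
  qed
  have Plt: "\<And>j. j \<in> P \<Longrightarrow> j \<in> {2..n} \<and> par j < beta n par j"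
    unfolding P_def using proper_lt by auto
  have LP: "L = insert 1 (beta n par ` P)"
  proof (rule set_eqI, rule iffI)
    fix i assume "i \<in> L"
    then have i1: "i \<in> {1..n}" and li: "leading n par i" unfolding L_def by auto
    show "i \<in> insert 1 (beta n par ` P)"
    proof (cases "i = 1")
      case True then show ?thesis by simp
    next
      case False
      obtain a where aG: "a \<in> ga_starts n par i" and ac: "a = 1 \<or> par a < i"
        using ga_exists[OF i1] by blast
      have top: "ga_top n par i = a" using ga_top_char[OF aG ac] .
      have ba: "beta n par a = i" using li top unfolding leading_def by simp
      have da: "desc n par i a" using aG unfolding ga_starts_def by blast
      have "a \<noteq> 1"
      proof
        assume "a = 1"
        then have "i \<le> 1" using aG desc_refl[OF o] unfolding ga_starts_def by blast
        then show False using False i1 by simp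
      qed
      then have a2: "a \<in> {2..n}" and pa: "par a < i" using desc_range[OF da] ac by auto
      have "a \<in> P" unfolding P_def using a2 pa ba by simp
      then show ?thesis using ba by blast
    qed
  next
    fix i assume "i \<in> insert 1 (beta n par ` P)"
    then show "i \<in> L"
    proof
      assume "i = 1"
      have "ga_top n par 1 = 1" using ga_top_char[OF i_in_ga[OF o]] by simp
      then show "i \<in> L" unfolding L_def leading_def using \<open>i = 1\<close> beta1[OF n1] o by simp
    next
      assume "i \<in> beta n par ` P"
      then obtain j where jP: "j \<in> P" and ij: "i = beta n par j" by blast
      have j2: "j \<in> {2..n}" and lt: "par j < beta n par j" using Plt[OF jP] by auto
      have j1: "j \<in> {1..n}" using j2 by auto
      have "i \<in> {1..n}" using desc_dom[OF beta_prop(1)[OF j1]] ij by simp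
      moreover have "leading n par i" unfolding leading_def using proper_top[OF j2 lt] ij by simp
      ultimately show "i \<in> L" unfolding L_def by simp
    qed
  qed
  have n1P: "1 \<notin> beta n par ` P"
  proof
    assume "1 \<in> beta n par ` P"
    then obtain j where jP: "j \<in> P" and ij: "1 = beta n par j" by blast
    have j2: "j \<in> {2..n}" and lt: "par j < beta n par j" using Plt[OF jP] by auto
    show False using lt ij par_in[OF j2] by simp
  qed
  have inj: "inj_on (beta n par) P"
  proof (rule inj_onI)
    fix x y assume "x \<in> P" "y \<in> P" "beta n par x = beta n par y"
    then show "x = y" using Plt proper_top by metis
  qed
  have finP: "finite P" unfolding P_def by simp
  have "card L = Suc (card P)"
    using LP n1P card_image[OF inj] finP by simp
  moreover have "lead n par = card L" unfolding lead_def L_def by simp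
  moreover have "impe n par = card I" unfolding impe_def I_def by simp
  ultimately show ?thesis using PI n1 by simp
qed

end

theorem lemma11:
  fixes n :: nat and par :: "nat \<Rightarrow> nat"
  assumes "n \<ge> 1" and "cayley_tree n par"
  shows "lead n par = n - impe n par"
proof -
  interpret ct n par using assms(2) by unfold_locales
  show ?thesis using main[OF assms(1)] .
qed

end
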